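(* Suppose $d=2$ and let $\lambda\in\mathbb R$. Then $L,(L^*+\lambda)^2$ is a Leonard pair on $\mathcal P_d(\mathbb R)$ if and only if $r\neq s$ and $2(\lambda+1)\in\left\{\frac{r-s}{r+s+2},\frac{s-r}{r+s+4}\right\}$.
   Context: Let $r,s\in(-1,\infty)$. Write $(x)_i=x(x+1)\cdots(x+i-1)$, $(x)_0=1$. For $0\le i\le d$ put $\theta_i=(d-i)(d-i+r+s+1)$ (distinct) and $\theta^*_i=i$. Put $b^*_i=\frac{(d-i)(i-d-s)(2d-2i+r+s+2)_i}{(2d-2i+r+s)_{i+1}}$ ($0\le i\le d-1$), $c^*_i=\frac{i(i-d-r-1)(d-i+r+s+1)_{d-i}}{(d-i+r+s+2)_{d-i+1}}$ ($1\le i\le d$), $b^*_d=c^*_0=0$, and $a^*_i=\theta^*_0-b^*_i-c^*_i$. Let $\mathcal P_d(\mathbb R)$ be the real polynomials of degree at most $d$, each determined by its values at $\theta_0,\dots,\theta_d$. Let $L,L^*$ be the linear maps on $\mathcal P_d(\mathbb R)$ with $(Lf)(\theta_i)=\theta_i f(\theta_i)$ and $(L^*f)(\theta_i)=b^*_i f(\theta_{i+1})+a^*_i f(\theta_i)+c^*_i f(\theta_{i-1})$ ($0\le i\le d$; terms with coefficient $b^*_d$ or $c^*_0$ omitted); $\lambda$ stands for $\lambda$ times the identity. A square matrix is irreducible tridiagonal if its nonzero entries lie on the diagonal, subdiagonal or superdiagonal and all subdiagonal and superdiagonal entries are nonzero. A Leonard pair on a nonzero finite-dimensional vector space $V$ is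 an ordered pair $A,A^*$ of linear maps on $V$ such that there is an ordered basis in which $A$ is diagonal and $A^*$ is irreducible tridiagonal, and there is an ordered basis in which $A^*$ is diagonal and $A$ is irreducible tridiagonal. *)

theory Defs
  imports "HOL-Computational_Algebra.Polynomial"
begin

definition Pd :: "nat \<Rightarrow> real poly set" where
  "Pd d = {p. degree p \<le> d}"

definition is_basis :: "real poly set \<Rightarrow> nat \<Rightarrow> (nat \<Rightarrow> real poly) \<Rightarrow> bool" where
  "is_basis V n v \<longleftrightarrow> (\<forall>i<n. v i \<in> V) \<and>
     (\<forall>x\<in>V. \<exists>!c::nat \<Rightarrow> real. (\<forall>i\<ge>n. c i = 0) \<and> x = (\<Sum>i<n. smult (c i) (v i)))"

text \<open>M is the matrix of A with respect to the basis v (columns = images of basis vectors).\<close>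
definition matrix_wrt :: "nat \<Rightarrow> (nat \<Rightarrow> real poly) \<Rightarrow> (real poly \<Rightarrow> real poly) \<Rightarrow> (nat \<Rightarrow> nat \<Rightarrow> real) \<Rightarrow> bool" where
  "matrix_wrt n v A M \<longleftrightarrow> (\<forall>j<n. A (v j) = (\<Sum>i<n. smult (M i j) (v i)))"

definition is_diagonal :: "nat \<Rightarrow> (nat \<Rightarrow> nat \<Rightarrow> real) \<Rightarrow> bool" where
  "is_diagonal n M \<longleftrightarrow> (\<forall>i<n. \<forall>j<n. i \<noteq> j \<longrightarrow> M i j = 0)"

definition irred_tridiagonal :: "nat \<Rightarrow> (nat \<Rightarrow> nat \<Rightarrow> real) \<Rightarrow> bool" where
  "irred_tridiagonal n M \<longleftrightarrow>
     (\<forall>i<n. \<forall>j<n. (i > j + 1 \<or> j > i + 1) \<longrightarrow> M i j = 0) \<and>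
     (\<forall>i. i + 1 < n \<longrightarrow> M (i + 1) i \<noteq> 0 \<and> M i (i + 1) \<noteq> 0)"

definition linear_map_on :: "real poly set \<Rightarrow> (real poly \<Rightarrow> real poly) \<Rightarrow> bool" where
  "linear_map_on V A \<longleftrightarrow> A ` V \<subseteq> V \<and>
     (\<forall>x\<in>V. \<forall>y\<in>V. A (x + y) = A x + A y) \<and> (\<forall>a. \<forall>x\<in>V. A (smult a x) = smult a (A x))"

definition diag_tridiag_basis :: "real poly set \<Rightarrow> (real poly \<Rightarrow> real poly) \<Rightarrow> (real poly \<Rightarrow> real poly) \<Rightarrow> bool" where
  "diag_tridiag_basis V A B \<longleftrightarrow>
     (\<exists>n v M N. is_basis V n v \<and> matrix_wrt n v A M \<and> is_diagonal n M \<and>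
                matrix_wrt n v B N \<and> irred_tridiagonal n N)"

definition leonard_pair :: "real poly set \<Rightarrow> (real poly \<Rightarrow> real poly) \<Rightarrow> (real poly \<Rightarrow> real poly) \<Rightarrow> bool" where
  "leonard_pair V A B \<longleftrightarrow> V \<noteq> {0} \<and> linear_map_on V A \<and> linear_map_on V B \<and>
     diag_tridiag_basis V A B \<and> diag_tridiag_basis V B A"

definition theta :: "real \<Rightarrow> real \<Rightarrow> nat \<Rightarrow> nat \<Rightarrow> real" where
  "theta r s d i = real (d - i) * (real (d - i) + r + s + 1)"

definition thetas :: "nat \<Rightarrow> real" where
  "thetas i = real i"

definition bs :: "real \<Rightarrow> real \<Rightarrow> nat \<Rightarrow> nat \<Rightarrow> real" where
  "bs r s d i = (if i < d then
      (real d - real i) * (real i - real d - s) * pochhammer (2 * real d - 2 * real i + r + s + 2) i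
        / pochhammer (2 * real d - 2 * real i + r + s) (i + 1)
    else 0)"

definition cs :: "real \<Rightarrow> real \<Rightarrow> nat \<Rightarrow> nat \<Rightarrow> real" where
  "cs r s d i = (if 1 \<le> i \<and> i \<le> d then
      real i * (real i - real d - r - 1) * pochhammer (real d - real i + r + s + 1) (d - i)
        / pochhammer (real d - real i + r + s + 2) (d - i + 1)
    else 0)"

definition as :: "real \<Rightarrow> real \<Rightarrow> nat \<Rightarrow> nat \<Rightarrow> real" where
  "as r s d i = thetas 0 - bs r s d i - cs r s d i"

definition Lmap :: "real \<Rightarrow> real \<Rightarrow> nat \<Rightarrow> real poly \<Rightarrow> real poly" where
  "Lmap r s d f = (THE g. g \<in> Pd d \<and>
     (\<forall>i\<le>d. poly g (theta r s d i) = theta r s d i * poly f (theta r s d i)))"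

text \<open>L*: terms with coefficient b*_d or c*_0 (both zero) are harmless, so are kept.\<close>
definition Lstar :: "real \<Rightarrow> real \<Rightarrow> nat \<Rightarrow> real poly \<Rightarrow> real poly" where
  "Lstar r s d f = (THE g. g \<in> Pd d \<and>
     (\<forall>i\<le>d. poly g (theta r s d i) =
        bs r s d i * poly f (theta r s d (i + 1)) + as r s d i * poly f (theta r s d i)
        + cs r s d i * poly f (theta r s d (i - 1))))"

end

theory Submission
  imports Defs
begin


lemma sum3: "(\<Sum>k<(3::nat). f k) = f 0 + f 1 + (f 2 :: 'a::comm_monoid_add)"
  by (simp add: numeral_3_eq_3 eval_nat_numeral add.assoc)

lemma pd2_unique:
  fixes t :: "nat \<Rightarrow> real"
  assumes "f \<in> Pd 2" "g \<in> Pd 2" "t 0 \<noteq> t 1" "t 0 \<noteq> t 2" "t 1 \<noteq> t 2"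
    and "\<forall>i\<le>2. poly f (t i) = poly g (t i)"
  shows "f = g"
proof (rule ccontr)
  assume ne: "f \<noteq> g"
  let ?h = "f - g"
  have h0: "?h \<noteq> 0" using ne by simp
  have dh: "degree ?h \<le> 2" using assms(1,2) unfolding Pd_def
    by (metis (no_types, lifting) degree_diff_le mem_Collect_eq)
  have sub: "{t 0, t 1, t 2} \<subseteq> {x. poly ?h x = 0}" using assms(6) by auto
  have "3 = card {t 0, t 1, t 2}" using assms(3,4,5) by auto
  also have "\<dots> \<le> card {x. poly ?h x = 0}"
    by (rule card_mono[OF poly_roots_finite[OF h0] sub])
  also have "\<dots> \<le> degree ?h" by (rule card_poly_roots_bound[OF h0])
  finally show False using dh by simp
qed

lemma pd2_exists:
  fixes t :: "nat \<Rightarrow> real"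
  assumes "t 0 \<noteq> t 1" "t 0 \<noteq> t 2" "t 1 \<noteq> t 2"
  shows "\<exists>g\<in>Pd 2. \<forall>i\<le>2. poly g (t i) = y i"
proof -
  define D0 where "D0 = (t 0 - t 1) * (t 0 - t 2)"
  define D1 where "D1 = (t 1 - t 0) * (t 1 - t 2)"
  define D2 where "D2 = (t 2 - t 0) * (t 2 - t 1)"
  have D: "D0 \<noteq> 0" "D1 \<noteq> 0" "D2 \<noteq> 0" using assms by (auto simp: D0_def D1_def D2_def)
  define g where "g = smult (y 0 / D0) ([:- t 1, 1:] * [:- t 2, 1:])
     + smult (y 1 / D1) ([:- t 0, 1:] * [:- t 2, 1:])
     + smult (y 2 / D2) ([:- t 0, 1:] * [:- t 1, 1:])"
  have dq: "degree ([:- a, 1:] * [:- b, 1:]) \<le> 2" for a b :: real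
    using degree_mult_le[of "[:-a,1:]" "[:-b,1:]"] by simp
  have "degree g \<le> 2" unfolding g_def
    by (intro degree_add_le order.trans[OF degree_smult_le] dq)
  moreover have "\<forall>i\<le>2. poly g (t i) = y i"
  proof (intro allI impI)
    fix i :: nat assume "i \<le> 2"
    then have "i = 0 \<or> i = 1 \<or> i = 2" by auto
    moreover have "poly g (t 0) = y 0 / D0 * ((t 0 - t 1) * (t 0 - t 2)) + y 1 / D1 * 0 + y 2 / D2 * 0"
      unfolding g_def by (simp add: algebra_simps)
    moreover have "poly g (t 1) = y 0 / D0 * 0 + y 1 / D1 * ((t 1 - t 0) * (t 1 - t 2)) + y 2 / D2 * 0"
      unfolding g_def by (simp add: algebra_simps)
    moreover have "poly g (t 2) = y 0 / D0 * 0 + y 1 / D1 * 0 + y 2 / D2 * ((t 2 - t 0) * (t 2 - t 1))"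
      unfolding g_def by (simp add: algebra_simps)
    ultimately show "poly g (t i) = y i" using assms by (auto simp: D0_def D1_def D2_def)
  qed
  ultimately show ?thesis unfolding Pd_def by auto
qed

lemma pd2_ex1:
  fixes t :: "nat \<Rightarrow> real"
  assumes "t 0 \<noteq> t 1" "t 0 \<noteq> t 2" "t 1 \<noteq> t 2"
  shows "\<exists>!g. g \<in> Pd 2 \<and> (\<forall>i\<le>2. poly g (t i) = y i)"
  using pd2_exists[OF assms, of y] pd2_unique[OF _ _ assms] by metis

definition interp :: "(nat \<Rightarrow> real) \<Rightarrow> (nat \<Rightarrow> real) \<Rightarrow> real poly" where
  "interp t y = (THE g. g \<in> Pd 2 \<and> (\<forall>i\<le>2. poly g (t i) = y i))"

lemma interp:
  fixes t :: "nat \<Rightarrow> real"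
  assumes "t 0 \<noteq> t 1" "t 0 \<noteq> t 2" "t 1 \<noteq> t 2"
  shows "interp t y \<in> Pd 2" "\<And>i. i \<le> 2 \<Longrightarrow> poly (interp t y) (t i) = y i"
  using theI'[OF pd2_ex1[OF assms, of y]] unfolding interp_def by auto


definition det3 :: "(nat \<Rightarrow> nat \<Rightarrow> real) \<Rightarrow> real" where
  "det3 A = A 0 0 * (A 1 1 * A 2 2 - A 1 2 * A 2 1) - A 0 1 * (A 1 0 * A 2 2 - A 1 2 * A 2 0)
          + A 0 2 * (A 1 0 * A 2 1 - A 1 1 * A 2 0)"

definition adj3 :: "(nat \<Rightarrow> nat \<Rightarrow> real) \<Rightarrow> nat \<Rightarrow> nat \<Rightarrow> real" where
  "adj3 A k m = (if k = 0 \<and> m = 0 then A 1 1 * A 2 2 - A 1 2 * A 2 1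
     else if k = 0 \<and> m = 1 then - (A 0 1 * A 2 2 - A 0 2 * A 2 1)
     else if k = 0 \<and> m = 2 then A 0 1 * A 1 2 - A 0 2 * A 1 1
     else if k = 1 \<and> m = 0 then - (A 1 0 * A 2 2 - A 1 2 * A 2 0)
     else if k = 1 \<and> m = 1 then A 0 0 * A 2 2 - A 0 2 * A 2 0
     else if k = 1 \<and> m = 2 then - (A 0 0 * A 1 2 - A 0 2 * A 1 0)
     else if k = 2 \<and> m = 0 then A 1 0 * A 2 1 - A 1 1 * A 2 0
     else if k = 2 \<and> m = 1 then - (A 0 0 * A 2 1 - A 0 1 * A 2 0)
     else A 0 0 * A 1 1 - A 0 1 * A 1 0)"

lemma adj_left:
  "k < 3 \<Longrightarrow> (\<Sum>m<3. adj3 A k m * (\<Sum>j<3. A m j * d j)) = det3 A * d k"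
  unfolding sum3 adj3_def det3_def
  by (auto simp: less_Suc_eq numeral_3_eq_3 eval_nat_numeral) (simp_all add: algebra_simps)

lemma adj_right:
  "m < 3 \<Longrightarrow> (\<Sum>k<3. A m k * (\<Sum>j<3. adj3 A k j * y j)) = det3 A * y m"
  unfolding sum3 adj3_def det3_def
  by (auto simp: less_Suc_eq numeral_3_eq_3 eval_nat_numeral) (simp_all add: algebra_simps)

lemma cramer3:
  assumes "det3 A \<noteq> 0"
  shows "\<exists>!c. (\<forall>k\<ge>3. c k = 0) \<and> (\<forall>m<3. (\<Sum>k<3. A m k * c k) = y m)"
proof (rule ex_ex1I)
  define c where "c k = (if k < 3 then (\<Sum>j<3. adj3 A k j * y j) / det3 A else 0)" for k
  have "(\<Sum>k<3. A m k * c k) = y m" if "m < 3" for m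
  proof -
    have "(\<Sum>k<3. A m k * c k) = (\<Sum>k<3. A m k * (\<Sum>j<3. adj3 A k j * y j)) / det3 A"
      using assms unfolding c_def sum3 by (simp add: field_simps)
    also have "\<dots> = y m" using adj_right[OF that, of A y] assms by simp
    finally show ?thesis .
  qed
  then show "\<exists>c. (\<forall>k\<ge>3. c k = 0) \<and> (\<forall>m<3. (\<Sum>k<3. A m k * c k) = y m)"
    unfolding c_def by (intro exI[of _ c]) (auto simp: c_def)
next
  fix c c' assume c: "(\<forall>k\<ge>3. c k = 0) \<and> (\<forall>m<3. (\<Sum>k<3. A m k * c k) = y m)"
    and c': "(\<forall>k\<ge>3. c' k = 0) \<and> (\<forall>m<3. (\<Sum>k<3. A m k * c' k) = y m)"
  have "c' k = c k" for k
  proof (cases "k < 3")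
    case True
    have z: "(\<Sum>j<3. A m j * (c' j - c j)) = 0" if "m < 3" for m
      using c c' that by (simp add: right_diff_distrib sum_subtractf)
    have "det3 A * (c' k - c k) = (\<Sum>m<3. adj3 A k m * (\<Sum>j<3. A m j * (c' j - c j)))"
      using adj_left[OF True, of A "\<lambda>j. c' j - c j"] by simp
    also have "\<dots> = 0" using z by simp
    finally show ?thesis using assms by simp
  next
    case False then show ?thesis using c c' by auto
  qed
  then show "c' = c" by auto
qed


lemma pd_add: "f \<in> Pd n \<Longrightarrow> g \<in> Pd n \<Longrightarrow> f + g \<in> Pd n"
  unfolding Pd_def by (auto intro: order.trans[OF degree_add_le])

lemma pd_smult: "f \<in> Pd n \<Longrightarrow> smult a f \<in> Pd n"
  unfolding Pd_def by (auto intro: order.trans[OF degree_smult_le])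

lemma pd_zero: "0 \<in> Pd n" unfolding Pd_def by simp

lemma pd_sum3: "(\<And>k::nat. k < 3 \<Longrightarrow> v k \<in> Pd n) \<Longrightarrow> (\<Sum>k<3. smult (c k) (v k)) \<in> Pd n"
  unfolding sum3 by (intro pd_add pd_smult) auto

lemma poly_sum3: "poly (\<Sum>k<(3::nat). smult (c k) (v k)) x = (\<Sum>k<3. c k * poly (v k) x)"
  unfolding sum3 by simp

lemma basis3:
  fixes t :: "nat \<Rightarrow> real"
  assumes t: "t 0 \<noteq> t 1" "t 0 \<noteq> t 2" "t 1 \<noteq> t 2"
    and v: "\<And>k. k < 3 \<Longrightarrow> v k \<in> Pd 2"
    and d: "det3 (\<lambda>m k. poly (v k) (t m)) \<noteq> 0"
  shows "is_basis (Pd 2) 3 v"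
  unfolding is_basis_def
proof (intro conjI ballI allI impI)
  show "v i \<in> Pd 2" if "i < 3" for i using v that by auto
next
  fix x assume x: "x \<in> Pd 2"
  have eqv: "x = (\<Sum>k<3. smult (c k) (v k)) \<longleftrightarrow>
      (\<forall>m<3. (\<Sum>k<3. poly (v k) (t m) * c k) = poly x (t m))" for c
  proof
    assume "x = (\<Sum>k<3. smult (c k) (v k))"
    then show "\<forall>m<3. (\<Sum>k<3. poly (v k) (t m) * c k) = poly x (t m)"
      by (simp add: poly_sum3 mult.commute)
  next
    assume h: "\<forall>m<3. (\<Sum>k<3. poly (v k) (t m) * c k) = poly x (t m)"
    show "x = (\<Sum>k<3. smult (c k) (v k))"
    proof (rule pd2_unique[OF x pd_sum3 t])
      show "v k \<in> Pd 2" if "k < 3" for k using v that .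
      show "\<forall>i\<le>2. poly x (t i) = poly (\<Sum>k<3. smult (c k) (v k)) (t i)"
        using h by (auto simp: poly_sum3 mult.commute)
    qed
  qed
  show "\<exists>!c. (\<forall>i\<ge>3. c i = 0) \<and> x = (\<Sum>i<3. smult (c i) (v i))"
    unfolding eqv using cramer3[OF d, of "\<lambda>m. poly x (t m)"] by simp
qed

lemma matrix_wrt3:
  fixes t :: "nat \<Rightarrow> real"
  assumes t: "t 0 \<noteq> t 1" "t 0 \<noteq> t 2" "t 1 \<noteq> t 2"
    and v: "\<And>k. k < 3 \<Longrightarrow> v k \<in> Pd 2"
    and A: "\<And>j. j < 3 \<Longrightarrow> A (v j) \<in> Pd 2"
    and vals: "\<And>j m. j < 3 \<Longrightarrow> m < 3 \<Longrightarrow> poly (A (v j)) (t m) = (\<Sum>i<3. M i j * poly (v i) (t m))"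
  shows "matrix_wrt 3 v A M"
  unfolding matrix_wrt_def
proof (intro allI impI)
  fix j :: nat assume j: "j < 3"
  show "A (v j) = (\<Sum>i<3. smult (M i j) (v i))"
  proof (rule pd2_unique[OF A[OF j] pd_sum3 t])
    show "v k \<in> Pd 2" if "k < 3" for k using v that .
    show "\<forall>i\<le>2. poly (A (v j)) (t i) = poly (\<Sum>k<3. smult (M k j) (v k)) (t i)"
      using vals[OF j] by (auto simp: poly_sum3)
  qed
qed



lemma lt3: "(m::nat) < 3 \<longleftrightarrow> m = 0 \<or> m = 1 \<or> m = 2" by auto

lemma sum_single:
  assumes "finite A" "a \<in> A" "\<forall>k\<in>A. k \<noteq> a \<longrightarrow> f k = 0"
  shows "sum f A = f a"
proof -
  have "sum f A = f a + sum f (A - {a})" by (rule sum.remove[OF assms(1,2)])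
  moreover have "sum f (A - {a}) = 0" using assms(3) by (intro sum.neutral) auto
  ultimately show ?thesis by simp
qed

definition Tm :: "real \<Rightarrow> real \<Rightarrow> nat \<Rightarrow> nat \<Rightarrow> real" where
  "Tm r s i j = (if j = i + 1 then bs r s 2 i else if j = i then as r s 2 i
     else if i = j + 1 then cs r s 2 i else 0)"

definition Tl :: "real \<Rightarrow> real \<Rightarrow> real \<Rightarrow> nat \<Rightarrow> nat \<Rightarrow> real" where
  "Tl r s lam i j = Tm r s i j + (if i = j then lam else 0)"

definition Sm :: "real \<Rightarrow> real \<Rightarrow> real \<Rightarrow> nat \<Rightarrow> nat \<Rightarrow> real" where
  "Sm r s lam i j = (\<Sum>k<3. Tl r s lam i k * Tl r s lam k j)"

definition Bm :: "real \<Rightarrow> real \<Rightarrow> real \<Rightarrow> real poly \<Rightarrow> real poly" where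
  "Bm r s lam f = Lstar r s 2 (Lstar r s 2 f + smult lam f) + smult lam (Lstar r s 2 f + smult lam f)"

definition Uv :: "real \<Rightarrow> real \<Rightarrow> nat \<Rightarrow> nat \<Rightarrow> real" where
  "Uv r s j m = (if j = 0 then 1
     else if j = 1 then (if m = 0 then 2 * (s + 2) else if m = 1 then s - r else - 2 * (r + 1))
     else (if m = 0 then (s + 1) * (s + 2) else if m = 1 then - (r + 2) * (s + 1) else (r + 1) * (r + 2)))"

definition NL :: "real \<Rightarrow> real \<Rightarrow> nat \<Rightarrow> nat \<Rightarrow> real" where
  "NL r s i j = (if i = 0 \<and> j = 0 then 2 * (r + 1) else if i = 0 \<and> j = 1 then 2 * (r + 1) * (s + 2)
     else if i = 1 \<and> j = 0 then 1 else if i = 1 \<and> j = 1 then r + s + 4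
     else if i = 1 \<and> j = 2 then (r + 2) * (s + 1) else if i = 2 \<and> j = 1 then 2
     else if i = 2 \<and> j = 2 then 2 * (s + 1) else 0)"

definition ee :: "real \<Rightarrow> real \<Rightarrow> nat \<Rightarrow> real poly" where
  "ee r s k = interp (theta r s 2) (\<lambda>m. if m = k then 1 else 0)"

context
  fixes r s :: real
  assumes r: "r > -1" and s: "s > -1"
begin

lemma th_vals: "theta r s 2 0 = 2 * (r + s + 3)" "theta r s 2 1 = r + s + 2" "theta r s 2 (Suc 0) = r + s + 2"
  "theta r s 2 2 = 0" "theta r s 2 3 = 0"
  by (simp_all add: theta_def)

lemma th_dist: "theta r s 2 0 \<noteq> theta r s 2 1" "theta r s 2 0 \<noteq> theta r s 2 2"
  "theta r s 2 1 \<noteq> theta r s 2 2"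
  using r s by (simp_all add: th_vals)

lemma bc_vals:
  "bs r s 2 0 = - 2 * (s + 2) / (r + s + 4)"
  "bs r s 2 1 = - (s + 1) * (r + s + 4) / ((r + s + 2) * (r + s + 3))"
  "bs r s 2 (Suc 0) = - (s + 1) * (r + s + 4) / ((r + s + 2) * (r + s + 3))"
  "bs r s 2 2 = 0"
  "cs r s 2 0 = 0"
  "cs r s 2 1 = - (r + 2) * (r + s + 2) / ((r + s + 3) * (r + s + 4))"
  "cs r s 2 (Suc 0) = - (r + 2) * (r + s + 2) / ((r + s + 3) * (r + s + 4))"
  "cs r s 2 2 = - 2 * (r + 1) / (r + s + 2)"
  by (simp_all add: bs_def cs_def pochhammer_Suc eval_nat_numeral algebra_simps)

lemma nz: "r + s + 2 \<noteq> 0" "r + s + 3 \<noteq> 0" "r + s + 4 \<noteq> 0" "r + 1 \<noteq> 0" "s + 1 \<noteq> 0"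
  "r + 2 \<noteq> 0" "s + 2 \<noteq> 0"
  using r s by linarith+

lemma as_val: "as r s 2 i = - bs r s 2 i - cs r s 2 i"
  by (simp add: as_def thetas_def)

lemma bc_nz: "bs r s 2 0 \<noteq> 0" "bs r s 2 1 \<noteq> 0" "cs r s 2 1 \<noteq> 0" "cs r s 2 2 \<noteq> 0"
  using r s by (simp_all add: bc_vals)

lemma a01: "as r s 2 0 + as r s 2 1 = (r + 3 * s + 4) / (r + s + 2)"
  unfolding as_val bc_vals using nz by (simp add: divide_simps) (simp add: algebra_simps)

lemma a12: "as r s 2 1 + as r s 2 2 = (3 * r + s + 8) / (r + s + 4)"
  unfolding as_val bc_vals using nz by (simp add: divide_simps) (simp add: algebra_simps)

lemma Lstar_eq: "Lstar r s 2 f = interp (theta r s 2) (\<lambda>i. bs r s 2 i * poly f (theta r s 2 (i + 1))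
   + as r s 2 i * poly f (theta r s 2 i) + cs r s 2 i * poly f (theta r s 2 (i - 1)))"
  by (simp add: Lstar_def interp_def)

lemma Lmap_eq: "Lmap r s 2 f = interp (theta r s 2) (\<lambda>i. theta r s 2 i * poly f (theta r s 2 i))"
  by (simp add: Lmap_def interp_def)

lemma th_SS: "theta r s 2 (Suc (Suc 0)) = theta r s 2 2" by (simp add: numeral_2_eq_2)

lemmas interp_th = interp[OF th_dist]

lemma LS_pd: "Lstar r s 2 f \<in> Pd 2"
  unfolding Lstar_eq by (rule interp_th)

lemma L_pd: "Lmap r s 2 f \<in> Pd 2"
  unfolding Lmap_eq by (rule interp_th)

lemma L_val: "i < 3 \<Longrightarrow> poly (Lmap r s 2 f) (theta r s 2 i) = theta r s 2 i * poly f (theta r s 2 i)"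
  unfolding Lmap_eq by (subst interp_th) auto

lemma LS_val: "i < 3 \<Longrightarrow> poly (Lstar r s 2 f) (theta r s 2 i) = (\<Sum>j<3. Tm r s i j * poly f (theta r s 2 j))"
  unfolding Lstar_eq
  apply (subst interp_th, simp)
  apply (auto simp: lt3 sum3 Tm_def bc_vals(4,5) th_SS)
  done

lemma ee_pd: "ee r s k \<in> Pd 2" unfolding ee_def by (rule interp_th)

lemma ee_val: "m < 3 \<Longrightarrow> poly (ee r s k) (theta r s 2 m) = (if m = k then 1 else 0)"
  unfolding ee_def by (subst interp_th) auto

lemma B_pd: "f \<in> Pd 2 \<Longrightarrow> Bm r s lam f \<in> Pd 2"
  unfolding Bm_def by (intro pd_add pd_smult LS_pd)

lemma B_val: "i < 3 \<Longrightarrow> poly (Bm r s lam f) (theta r s 2 i) =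
   (\<Sum>k<3. Tl r s lam i k * (\<Sum>j<3. Tl r s lam k j * poly f (theta r s 2 j)))"
proof -
  have g: "poly (Lstar r s 2 g + smult lam g) (theta r s 2 i) = (\<Sum>j<3. Tl r s lam i j * poly g (theta r s 2 j))"
    if "i < 3" for g i
    using that by (auto simp: LS_val lt3 sum3 Tl_def algebra_simps)
  assume i: "i < 3"
  show ?thesis unfolding Bm_def g[OF i]
    by (intro sum.cong refl) (use g in \<open>auto simp: lt3\<close>)
qed

lemma B_val2: "i < 3 \<Longrightarrow> poly (Bm r s lam f) (theta r s 2 i) = (\<Sum>j<3. Sm r s lam i j * poly f (theta r s 2 j))"
  unfolding B_val Sm_def sum3 by (simp add: algebra_simps)

lemmas uniq_th = pd2_unique[OF _ _ th_dist]

lemma lin_L: "linear_map_on (Pd 2) (Lmap r s 2)"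
  unfolding linear_map_on_def
proof (intro conjI ballI allI)
  show "Lmap r s 2 ` Pd 2 \<subseteq> Pd 2" using L_pd by auto
  fix x y assume "x \<in> Pd 2" "y \<in> Pd 2"
  show "Lmap r s 2 (x + y) = Lmap r s 2 x + Lmap r s 2 y"
    by (rule uniq_th[OF L_pd pd_add[OF L_pd L_pd]]) (auto simp: L_val algebra_simps)
next
  fix a x assume "x \<in> Pd 2"
  show "Lmap r s 2 (smult a x) = smult a (Lmap r s 2 x)"
    by (rule uniq_th[OF L_pd pd_smult[OF L_pd]]) (auto simp: L_val algebra_simps)
qed

lemma lin_B: "linear_map_on (Pd 2) (Bm r s lam)"
  unfolding linear_map_on_def
proof (intro conjI ballI allI)
  show "Bm r s lam ` Pd 2 \<subseteq> Pd 2" using B_pd by auto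
  fix x y assume xy: "x \<in> Pd 2" "y \<in> Pd 2"
  show "Bm r s lam (x + y) = Bm r s lam x + Bm r s lam y"
    by (rule uniq_th[OF B_pd[OF pd_add[OF xy]] pd_add[OF B_pd[OF xy(1)] B_pd[OF xy(2)]]])
      (auto simp: B_val2 sum3 algebra_simps)
next
  fix a x assume x: "x \<in> Pd 2"
  show "Bm r s lam (smult a x) = smult a (Bm r s lam x)"
    by (rule uniq_th[OF B_pd[OF pd_smult[OF x]] pd_smult[OF B_pd[OF x]]])
      (auto simp: B_val2 sum3 algebra_simps)
qed

lemma Sm_vals:
  "Sm r s lam 0 2 = bs r s 2 0 * bs r s 2 1"
  "Sm r s lam 2 0 = cs r s 2 2 * cs r s 2 1"
  "Sm r s lam 0 1 = bs r s 2 0 * (as r s 2 0 + as r s 2 1 + 2 * lam)"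
  "Sm r s lam 1 0 = cs r s 2 1 * (as r s 2 0 + as r s 2 1 + 2 * lam)"
  "Sm r s lam 1 2 = bs r s 2 1 * (as r s 2 1 + as r s 2 2 + 2 * lam)"
  "Sm r s lam 2 1 = cs r s 2 2 * (as r s 2 1 + as r s 2 2 + 2 * lam)"
  by (simp_all add: Sm_def Tl_def Tm_def sum3 algebra_simps)

lemma cond1_basis:
  fixes k :: "nat \<Rightarrow> nat"
  assumes kr: "k 0 < 3" "k 1 < 3" "k 2 < 3" and kd: "k 0 \<noteq> k 1" "k 0 \<noteq> k 2" "k 1 \<noteq> k 2"
    and z: "Sm r s lam (k 0) (k 2) = 0" "Sm r s lam (k 2) (k 0) = 0"
    and nzs: "Sm r s lam (k 0) (k 1) \<noteq> 0" "Sm r s lam (k 1) (k 0) \<noteq> 0"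
      "Sm r s lam (k 1) (k 2) \<noteq> 0" "Sm r s lam (k 2) (k 1) \<noteq> 0"
  shows "diag_tridiag_basis (Pd 2) (Lmap r s 2) (Bm r s lam)"
proof -
  define v where "v j = ee r s (k j)" for j
  have surj: "m < 3 \<Longrightarrow> m = k 0 \<or> m = k 1 \<or> m = k 2" for m
    using kr kd by (auto simp: lt3)
  have vv: "j < 3 \<Longrightarrow> m < 3 \<Longrightarrow> poly (v j) (theta r s 2 m) = (if m = k j then 1 else 0)" for j m
    unfolding v_def by (rule ee_val)
  have vp: "v j \<in> Pd 2" for j unfolding v_def by (rule ee_pd)
  define M where "M i j = (if i = j then theta r s 2 (k j) else 0)" for i j
  define N where "N i j = Sm r s lam (k i) (k j)" for i j
  have "is_basis (Pd 2) 3 v"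
  proof (rule basis3[OF th_dist vp])
    have "det3 (\<lambda>m k. poly (v k) (theta r s 2 m)) = det3 (\<lambda>m j. if m = k j then 1 else 0)"
      unfolding det3_def by (simp add: vv)
    also have "\<dots> \<noteq> 0" using kr kd surj[of 0] surj[of 1] surj[of 2]
      unfolding det3_def by auto
    finally show "det3 (\<lambda>m k. poly (v k) (theta r s 2 m)) \<noteq> 0" .
  qed
  moreover have "matrix_wrt 3 v (Lmap r s 2) M"
  proof (rule matrix_wrt3[OF th_dist vp L_pd])
    fix j m :: nat assume j: "j < 3" and m: "m < 3"
    show "poly (Lmap r s 2 (v j)) (theta r s 2 m) = (\<Sum>i<3. M i j * poly (v i) (theta r s 2 m))"
      using j m kr by (auto simp: L_val vv sum3 M_def lt3)
  qed
  moreover have "is_diagonal 3 M" unfolding is_diagonal_def M_def by auto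
  moreover have "matrix_wrt 3 v (Bm r s lam) N"
  proof (rule matrix_wrt3[OF th_dist vp])
    show "Bm r s lam (v j) \<in> Pd 2" for j using B_pd[OF vp] .
  next
    fix j m :: nat assume j: "j < 3" and m: "m < 3"
    have "poly (Bm r s lam (v j)) (theta r s 2 m) = Sm r s lam m (k j)"
      using j m kr by (auto simp: B_val2[OF m] vv sum3 lt3)
    also have "\<dots> = (\<Sum>i<3. N i j * poly (v i) (theta r s 2 m))"
      using surj[OF m] kd kr by (auto simp: vv sum3 N_def)
    finally show "poly (Bm r s lam (v j)) (theta r s 2 m) = (\<Sum>i<3. N i j * poly (v i) (theta r s 2 m))" .
  qed
  moreover have "irred_tridiagonal 3 N"
    unfolding irred_tridiagonal_def N_def using z nzs
    by (auto simp: lt3 less_Suc_eq numeral_2_eq_2)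
  ultimately show ?thesis unfolding diag_tridiag_basis_def by blast
qed

lemma T_eigen: "m < 3 \<Longrightarrow> j < 3 \<Longrightarrow> (\<Sum>k<3. Tm r s m k * Uv r s j k) = real j * Uv r s j m"
  unfolding lt3 sum3 Tm_def Uv_def as_val
  using nz by (auto simp: bc_vals divide_simps) (simp_all add: algebra_simps)

lemma Tl_eigen: "m < 3 \<Longrightarrow> j < 3 \<Longrightarrow> (\<Sum>k<3. Tl r s lam m k * Uv r s j k) = (real j + lam) * Uv r s j m"
proof -
  assume m: "m < 3" and j: "j < 3"
  have "(\<Sum>k<3. Tl r s lam m k * Uv r s j k) = (\<Sum>k<3. Tm r s m k * Uv r s j k) + lam * Uv r s j m"
    using m unfolding Tl_def sum3 by (auto simp: lt3 algebra_simps)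
  then show ?thesis using T_eigen[OF m j] by (simp add: algebra_simps)
qed

lemma U_det: "det3 (\<lambda>m j. Uv r s j m) = - ((r + s + 2) * (r + s + 3) * (r + s + 4))"
  unfolding det3_def Uv_def by (simp add: algebra_simps)

lemma NL_vals: "m < 3 \<Longrightarrow> j < 3 \<Longrightarrow> theta r s 2 m * Uv r s j m = (\<Sum>i<3. NL r s i j * Uv r s i m)"
  unfolding lt3 sum3 
  apply (elim disjE)
  apply (simp_all add: NL_def Uv_def th_vals)
  apply (simp_all add: algebra_simps)
  done

lemma cond2_basis: "diag_tridiag_basis (Pd 2) (Bm r s lam) (Lmap r s 2)"
proof -
  define u where "u j = interp (theta r s 2) (Uv r s j)" for j
  have uv: "m < 3 \<Longrightarrow> poly (u j) (theta r s 2 m) = Uv r s j m" for j m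
    unfolding u_def by (rule interp_th) simp
  have up: "u j \<in> Pd 2" for j unfolding u_def by (rule interp_th)
  define D where "D i j = (if i = j then (real j + lam)^2 else 0)" for i j :: nat
  have "is_basis (Pd 2) 3 u"
  proof (rule basis3[OF th_dist up])
    have "det3 (\<lambda>m k. poly (u k) (theta r s 2 m)) = det3 (\<lambda>m j. Uv r s j m)"
      unfolding det3_def by (simp add: uv)
    also have "\<dots> = - ((r + s + 2) * (r + s + 3) * (r + s + 4))"
      by (rule U_det)
    also have "\<dots> \<noteq> 0" using nz by simp
    finally show "det3 (\<lambda>m k. poly (u k) (theta r s 2 m)) \<noteq> 0" .
  qed
  moreover have "matrix_wrt 3 u (Bm r s lam) D"
  proof (rule matrix_wrt3[OF th_dist up])
    show "Bm r s lam (u j) \<in> Pd 2" for j using B_pd[OF up] .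
  next
    fix j m :: nat assume j: "j < 3" and m: "m < 3"
    have "poly (Bm r s lam (u j)) (theta r s 2 m) = (\<Sum>k<3. Tl r s lam m k * ((real j + lam) * Uv r s j k))"
      unfolding B_val[OF m] by (intro sum.cong refl) (auto simp: uv Tl_eigen j)
    also have "\<dots> = (real j + lam) * (\<Sum>k<3. Tl r s lam m k * Uv r s j k)"
      by (simp add: sum_distrib_left algebra_simps)
    also have "\<dots> = (real j + lam)^2 * Uv r s j m"
      using Tl_eigen[OF m j, of lam] by (simp add: power2_eq_square)
    also have "\<dots> = (\<Sum>i<3. D i j * poly (u i) (theta r s 2 m))"
      using j m by (auto simp: D_def sum3 uv lt3)
    finally show "poly (Bm r s lam (u j)) (theta r s 2 m) = (\<Sum>i<3. D i j * poly (u i) (theta r s 2 m))" .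
  qed
  moreover have "is_diagonal 3 D" unfolding is_diagonal_def D_def by auto
  moreover have "matrix_wrt 3 u (Lmap r s 2) (NL r s)"
  proof (rule matrix_wrt3[OF th_dist up])
    show "Lmap r s 2 (u j) \<in> Pd 2" for j using L_pd .
  next
    fix j m :: nat assume j: "j < 3" and m: "m < 3"
    show "poly (Lmap r s 2 (u j)) (theta r s 2 m) = (\<Sum>i<3. NL r s i j * poly (u i) (theta r s 2 m))"
      unfolding L_val[OF m] uv[OF m] sum3 using NL_vals[OF m j] by (simp add: sum3)
  qed
  moreover have "irred_tridiagonal 3 (NL r s)"
    unfolding irred_tridiagonal_def
  proof (rule conjI)
    show "\<forall>i<3. \<forall>j<3. j + 1 < i \<or> i + 1 < j \<longrightarrow> NL r s i j = 0" by (auto simp: lt3 NL_def)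
    have "NL r s (i + 1) i \<noteq> 0 \<and> NL r s i (i + 1) \<noteq> 0" if "i + 1 < 3" for i
    proof -
      from that have "i = 0 \<or> i = 1" by auto
      then show ?thesis using nz by (auto simp: NL_def)
    qed
    then show "\<forall>i. i + 1 < 3 \<longrightarrow> NL r s (i + 1) i \<noteq> 0 \<and> NL r s i (i + 1) \<noteq> 0" by blast
  qed
  ultimately show ?thesis unfolding diag_tridiag_basis_def by blast
qed


lemma th_inj: "m < 3 \<Longrightarrow> m' < 3 \<Longrightarrow> theta r s 2 m = theta r s 2 m' \<Longrightarrow> m = m'"
  using th_dist by (auto simp: lt3)

lemma onlyif:
  assumes "diag_tridiag_basis (Pd 2) (Lmap r s 2) (Bm r s lam)"
  shows "(as r s 2 0 + as r s 2 1 + 2 * lam = 0 \<or> as r s 2 1 + as r s 2 2 + 2 * lam = 0) \<and>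
         \<not> (as r s 2 0 + as r s 2 1 + 2 * lam = 0 \<and> as r s 2 1 + as r s 2 2 + 2 * lam = 0)"
proof -
  obtain n v M N where bas: "is_basis (Pd 2) n v" and mL: "matrix_wrt n v (Lmap r s 2) M"
    and dg: "is_diagonal n M" and mB: "matrix_wrt n v (Bm r s lam) N" and tri: "irred_tridiagonal n N"
    using assms unfolding diag_tridiag_basis_def by blast
  let ?t = "theta r s 2"
  have vp: "i < n \<Longrightarrow> v i \<in> Pd 2" for i using bas unfolding is_basis_def by blast
  have uq: "\<exists>!c. (\<forall>i\<ge>n. c i = 0) \<and> x = (\<Sum>i<n. smult (c i) (v i))" if "x \<in> Pd 2" for x
    using bas that unfolding is_basis_def by blast
  have indep: "c j = 0" if c: "\<forall>i\<ge>n. c i = 0" "(\<Sum>i<n. smult (c i) (v i)) = 0" for c j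
  proof -
    have P0: "(\<forall>i\<ge>n. (\<lambda>_. 0::real) i = 0) \<and> 0 = (\<Sum>i<n. smult ((\<lambda>_. 0::real) i) (v i))" by simp
    from uq[OF pd_zero] obtain x where x: "\<And>y. (\<forall>i\<ge>n. y i = 0) \<and> 0 = (\<Sum>i<n. smult (y i) (v i)) \<Longrightarrow> y = x"
      unfolding Ex1_def by blast
    have "c = x" by (rule x) (use c in simp)
    moreover have "(\<lambda>_. 0) = x" by (rule x) (rule P0)
    ultimately have "c = (\<lambda>_. 0)" by simp
    then show ?thesis by simp
  qed
  have vnz: "v j \<noteq> 0" if j: "j < n" for j
  proof
    assume v0: "v j = 0"
    have "(\<Sum>i<n. smult ((\<lambda>i. if i = j then 1 else 0) i) (v i)) = smult (if j = j then 1 else 0) (v j)"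
      by (rule sum_single[where f="\<lambda>i. smult ((\<lambda>i. if i = j then 1 else 0) i) (v i)", simplified]) (use j in auto)
    then have "(\<Sum>i<n. smult ((\<lambda>i. if i = j then 1 else 0) i) (v i)) = 0" using v0 by simp
    then have "(\<lambda>i. if i = j then 1 else (0::real)) j = 0" by (rule indep[rotated]) (use j in auto)
    then show False by simp
  qed
  have Lv: "Lmap r s 2 (v j) = smult (M j j) (v j)" if j: "j < n" for j
  proof -
    have "Lmap r s 2 (v j) = (\<Sum>i<n. smult (M i j) (v i))" using mL j unfolding matrix_wrt_def by blast
    also have "\<dots> = smult (M j j) (v j)"
      by (rule sum_single) (use j dg in \<open>auto simp: is_diagonal_def\<close>)
    finally show ?thesis .
  qed
  have Lval: "?t m * poly (v j) (?t m) = M j j * poly (v j) (?t m)" if "j < n" "m < 3" for j m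
    using L_val[OF that(2), of "v j"] Lv[OF that(1)] by (simp add: eq_commute[of "theta r s 2 m"])
  have exm: "\<exists>m. m < 3 \<and> poly (v j) (?t m) \<noteq> 0" if j: "j < n" for j
  proof (rule ccontr)
    assume "\<not> ?thesis"
    then have "v j = 0" by (intro uniq_th[OF vp[OF j] pd_zero]) auto
    then show False using vnz[OF j] by simp
  qed
  define k where "k j = (SOME m. m < 3 \<and> poly (v j) (?t m) \<noteq> 0)" for j
  have k: "k j < 3 \<and> poly (v j) (?t (k j)) \<noteq> 0" if "j < n" for j
    unfolding k_def by (rule someI_ex[OF exm[OF that]])
  have Mj: "M j j = ?t (k j)" if j: "j < n" for j
    using Lval[OF j, of "k j"] k[OF j] by simp
  have zero: "poly (v j) (?t m) = 0" if j: "j < n" and m: "m < 3" "m \<noteq> k j" for j m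
  proof -
    have "?t m \<noteq> ?t (k j)" using th_inj[OF m(1)] k[OF j] m(2) by metis
    then show ?thesis using Lval[OF j m(1)] Mj[OF j] by simp
  qed
  have inj: "inj_on k {..<n}"
  proof (rule inj_onI, rule ccontr)
    fix j j' assume j: "j \<in> {..<n}" and j': "j' \<in> {..<n}" and kk: "k j = k j'" and ne: "j \<noteq> j'"
    define a where "a = poly (v j') (?t (k j))"
    define b where "b = - poly (v j) (?t (k j))"
    have a0: "a \<noteq> 0" using k[of j'] j' kk unfolding a_def by simp
    have comb: "smult a (v j) + smult b (v j') = 0"
    proof (rule uniq_th[OF pd_add[OF pd_smult pd_smult] pd_zero])
      show "v j \<in> Pd 2" "v j' \<in> Pd 2" using vp j j' by auto
      show "\<forall>i\<le>2. poly (smult a (v j) + smult b (v j')) (?t i) = poly 0 (?t i)"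
      proof (intro allI impI)
        fix i :: nat assume "i \<le> 2"
        then have i: "i < 3" by simp
        show "poly (smult a (v j) + smult b (v j')) (?t i) = poly 0 (?t i)"
        proof (cases "i = k j")
          case True then show ?thesis unfolding a_def b_def by simp
        next
          case False then show ?thesis using zero[of j i] zero[of j' i] j j' kk i by simp
        qed
      qed
    qed
    define c where "c i = (if i = j then a else if i = j' then b else 0)" for i
    have "(\<Sum>i<n. smult (c i) (v i)) = (\<Sum>i<n. (if i = j then smult a (v j) else 0) + (if i = j' then smult b (v j') else 0))"
      by (intro sum.cong refl) (use ne in \<open>auto simp: c_def\<close>)
    also have "\<dots> = smult a (v j) + smult b (v j')"
      using j j' by (simp add: sum.distrib)
    finally have "(\<Sum>i<n. smult (c i) (v i)) = 0" using comb by simp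
    then have "c j = 0" by (rule indep[rotated]) (use j j' in \<open>auto simp: c_def\<close>)
    then show False using a0 by (simp add: c_def)
  qed
  have surj: "\<exists>i<n. k i = m" if m: "m < 3" for m
  proof (rule ccontr)
    assume no: "\<not> ?thesis"
    obtain c where c: "ee r s m = (\<Sum>i<n. smult (c i) (v i))" using ex1_implies_ex[OF uq[OF ee_pd]] by blast
    have "1 = poly (ee r s m) (?t m)" using ee_val[OF m] by simp
    also have "\<dots> = (\<Sum>i<n. c i * poly (v i) (?t m))" unfolding c by (simp add: poly_sum)
    also have "\<dots> = 0" using no zero m by (intro sum.neutral) auto
    finally show False by simp
  qed
  have img: "k ` {..<n} = {..<3}"
  proof
    show "k ` {..<n} \<subseteq> {..<3}" using k by auto
    show "{..<3} \<subseteq> k ` {..<n}" using surj by fastforce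
  qed
  have n3: "n = 3"
    using card_image[OF inj] img by simp
  have key: "N i j * poly (v i) (?t (k i)) = Sm r s lam (k i) (k j) * poly (v j) (?t (k j))"
    if i: "i < 3" and j: "j < 3" for i j
  proof -
    have ki: "k i < 3" and kj: "k j < 3" using k i j n3 by auto
    have "Bm r s lam (v j) = (\<Sum>l<n. smult (N l j) (v l))" using mB j n3 unfolding matrix_wrt_def by blast
    then have "poly (Bm r s lam (v j)) (?t (k i)) = (\<Sum>l<n. N l j * poly (v l) (?t (k i)))"
      by (simp add: poly_sum)
    also have "\<dots> = N i j * poly (v i) (?t (k i))"
    proof (rule sum_single)
      show "finite {..<n}" "i \<in> {..<n}" using i n3 by auto
      show "\<forall>l\<in>{..<n}. l \<noteq> i \<longrightarrow> N l j * poly (v l) (?t (k i)) = 0"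
      proof (intro ballI impI)
        fix l assume l: "l \<in> {..<n}" "l \<noteq> i"
        have "k l \<noteq> k i" using inj l i n3 unfolding inj_on_def by auto
        then show "N l j * poly (v l) (?t (k i)) = 0" using zero[of l "k i"] l ki by auto
      qed
    qed
    finally have e1: "poly (Bm r s lam (v j)) (?t (k i)) = N i j * poly (v i) (?t (k i))" .
    have "poly (Bm r s lam (v j)) (?t (k i)) = (\<Sum>l<3. Sm r s lam (k i) l * poly (v j) (?t l))"
      by (rule B_val2[OF ki])
    also have "\<dots> = Sm r s lam (k i) (k j) * poly (v j) (?t (k j))"
      by (rule sum_single) (use kj zero[of j] j n3 in auto)
    finally show ?thesis using e1 by simp
  qed
  have Niff: "N i j = 0 \<longleftrightarrow> Sm r s lam (k i) (k j) = 0" if "i < 3" "j < 3" for i j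
    using key[OF that] k[of i] k[of j] that n3 by auto
  have t02: "N 0 2 = 0" "N 2 0 = 0" using tri n3 unfolding irred_tridiagonal_def by auto
  have t01: "N 1 0 \<noteq> 0" "N 0 1 \<noteq> 0" using tri n3 unfolding irred_tridiagonal_def by auto
  have "1 + 1 < n" using n3 by simp
  then have "N (1 + 1) 1 \<noteq> 0 \<and> N 1 (1 + 1) \<noteq> 0" using tri unfolding irred_tridiagonal_def by blast
  then have t12: "N 2 1 \<noteq> 0" "N 1 2 \<noteq> 0" unfolding one_add_one by auto
  have S: "Sm r s lam (k 0) (k 2) = 0" "Sm r s lam (k 2) (k 0) = 0"
    "Sm r s lam (k 1) (k 0) \<noteq> 0" "Sm r s lam (k 0) (k 1) \<noteq> 0"
    "Sm r s lam (k 2) (k 1) \<noteq> 0" "Sm r s lam (k 1) (k 2) \<noteq> 0"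
    using t02 t01 t12 Niff by auto
  have kr: "k 0 < 3" "k 1 < 3" "k 2 < 3" using k n3 by auto
  have inj3: "inj_on k {..<3}" using inj n3 by simp
  have kd: "k 0 \<noteq> k 1" "k 0 \<noteq> k 2" "k 1 \<noteq> k 2"
    using inj_onD[OF inj3, of 0 1] inj_onD[OF inj3, of 0 2] inj_onD[OF inj3, of 1 2] by auto
  have Sv: "Sm r s lam 0 2 \<noteq> 0" "Sm r s lam 2 0 \<noteq> 0" unfolding Sm_vals using bc_nz by simp_all
  define P where "P = (as r s 2 0 + as r s 2 1 + 2 * lam = 0)"
  define Q where "Q = (as r s 2 1 + as r s 2 2 + 2 * lam = 0)"
  have S01: "Sm r s lam 0 1 = 0 \<longleftrightarrow> P" "Sm r s lam 1 0 = 0 \<longleftrightarrow> P"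
    unfolding Sm_vals P_def using bc_nz by simp_all
  have S12: "Sm r s lam 1 2 = 0 \<longleftrightarrow> Q" "Sm r s lam 2 1 = 0 \<longleftrightarrow> Q"
    unfolding Sm_vals Q_def using bc_nz by simp_all
  have "(P \<or> Q) \<and> \<not> (P \<and> Q)"
  proof -
    have c: "(k 0 = 0 \<or> k 0 = 1 \<or> k 0 = 2) \<and> (k 1 = 0 \<or> k 1 = 1 \<or> k 1 = 2) \<and> (k 2 = 0 \<or> k 2 = 1 \<or> k 2 = 2)"
      using kr by (simp add: lt3)
    show ?thesis using c kd S Sv S01 S12 by (elim conjE disjE; simp)
  qed
  then show ?thesis unfolding P_def Q_def .
qed

end


context
  fixes r s :: real
  assumes r: "r > -1" and s: "s > -1"
begin

lemma P_iff: "as r s 2 0 + as r s 2 1 + 2 * lam = 0 \<longleftrightarrow> 2 * (lam + 1) = (r - s) / (r + s + 2)"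
proof -
  have "as r s 2 0 + as r s 2 1 + 2 * lam = 0 \<longleftrightarrow> (r + 3 * s + 4) / (r + s + 2) + 2 * lam = 0"
    using a01[OF r s] by simp
  also have "\<dots> \<longleftrightarrow> 2 * (lam + 1) = (r - s) / (r + s + 2)"
    using nz[OF r s] by (simp add: divide_simps) (auto simp: algebra_simps)
  finally show ?thesis .
qed

lemma Q_iff: "as r s 2 1 + as r s 2 2 + 2 * lam = 0 \<longleftrightarrow> 2 * (lam + 1) = (s - r) / (r + s + 4)"
proof -
  have "as r s 2 1 + as r s 2 2 + 2 * lam = 0 \<longleftrightarrow> (3 * r + s + 8) / (r + s + 4) + 2 * lam = 0"
    using a12[OF r s] by simp
  also have "\<dots> \<longleftrightarrow> 2 * (lam + 1) = (s - r) / (r + s + 4)"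
    using nz[OF r s] by (simp add: divide_simps) (auto simp: algebra_simps)
  finally show ?thesis .
qed

lemma AB: "(r - s) / (r + s + 2) = (s - r) / (r + s + 4) \<longleftrightarrow> r = s"
proof -
  have "(r - s) / (r + s + 2) = (s - r) / (r + s + 4) \<longleftrightarrow> (r - s) * (r + s + 4) = (s - r) * (r + s + 2)"
    using nz[OF r s] by (simp add: divide_simps)
  also have "\<dots> \<longleftrightarrow> (r - s) * (2 * (r + s + 3)) = 0" by (auto simp: algebra_simps)
  also have "\<dots> \<longleftrightarrow> r = s" using nz[OF r s] by simp
  finally show ?thesis .
qed

lemma cond1_iff: "diag_tridiag_basis (Pd 2) (Lmap r s 2) (Bm r s lam) \<longleftrightarrow>
   (as r s 2 0 + as r s 2 1 + 2 * lam = 0 \<or> as r s 2 1 + as r s 2 2 + 2 * lam = 0) \<and>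
         \<not> (as r s 2 0 + as r s 2 1 + 2 * lam = 0 \<and> as r s 2 1 + as r s 2 2 + 2 * lam = 0)"
  (is "_ \<longleftrightarrow> (?P \<or> ?Q) \<and> \<not> (?P \<and> ?Q)")
proof
  assume "diag_tridiag_basis (Pd 2) (Lmap r s 2) (Bm r s lam)"
  then show "(?P \<or> ?Q) \<and> \<not> (?P \<and> ?Q)" by (rule onlyif[OF r s])
next
  assume h: "(?P \<or> ?Q) \<and> \<not> (?P \<and> ?Q)"
  have Sv: "Sm r s lam 0 2 \<noteq> 0" "Sm r s lam 2 0 \<noteq> 0"
    unfolding Sm_vals[OF r s] using bc_nz[OF r s] by simp_all
  have S01: "Sm r s lam 0 1 = 0 \<longleftrightarrow> ?P" "Sm r s lam 1 0 = 0 \<longleftrightarrow> ?P"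
    unfolding Sm_vals[OF r s] using bc_nz[OF r s] by simp_all
  have S12: "Sm r s lam 1 2 = 0 \<longleftrightarrow> ?Q" "Sm r s lam 2 1 = 0 \<longleftrightarrow> ?Q"
    unfolding Sm_vals[OF r s] using bc_nz[OF r s] by simp_all
  show "diag_tridiag_basis (Pd 2) (Lmap r s 2) (Bm r s lam)"
  proof (cases ?P)
    case True
    then have nQ: "\<not> ?Q" using h by blast
    show ?thesis
      by (rule cond1_basis[OF r s, where k="\<lambda>j. if j = 0 then 0 else if j = 1 then 2 else 1"])
        (use True nQ Sv S01 S12 in simp_all)
  next
    case False
    then have Q: "?Q" using h by blast
    show ?thesis
      by (rule cond1_basis[OF r s, where k="\<lambda>j. if j = 0 then 1 else if j = 1 then 0 else 2"])
        (use False Q Sv S01 S12 in simp_all)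
  qed
qed

end

theorem corollary2p11:
  fixes r s lam :: real
  assumes "r > -1" and "s > -1"
  shows "leonard_pair (Pd 2) (Lmap r s 2)
           (\<lambda>f. Lstar r s 2 (Lstar r s 2 f + smult lam f) + smult lam (Lstar r s 2 f + smult lam f))
         \<longleftrightarrow> r \<noteq> s \<and> 2 * (lam + 1) \<in> {(r - s) / (r + s + 2), (s - r) / (r + s + 4)}"
proof -
  have Beq: "(\<lambda>f. Lstar r s 2 (Lstar r s 2 f + smult lam f) + smult lam (Lstar r s 2 f + smult lam f)) = Bm r s lam"
    by (rule ext) (simp add: Bm_def)
  have ne: "Pd 2 \<noteq> {0}"
  proof
    assume "Pd 2 = {0}"
    moreover have "(1 :: real poly) \<in> Pd 2" unfolding Pd_def by simp
    ultimately show False by simp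
  qed
  have "leonard_pair (Pd 2) (Lmap r s 2) (Bm r s lam) \<longleftrightarrow> diag_tridiag_basis (Pd 2) (Lmap r s 2) (Bm r s lam)"
    unfolding leonard_pair_def using ne lin_L[OF assms] lin_B[OF assms] cond2_basis[OF assms] by blast
  also have "\<dots> \<longleftrightarrow> r \<noteq> s \<and> 2 * (lam + 1) \<in> {(r - s) / (r + s + 2), (s - r) / (r + s + 4)}"
    unfolding cond1_iff[OF assms] P_iff[OF assms] Q_iff[OF assms] using AB[OF assms] by auto
  finally show ?thesis unfolding Beq .
qed

end
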